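(* Let $G$ be a connected weighted multigraph on the vertex set $V$, $|V|\ge2$, with positive edge weights, weighted adjacency matrix $A$, spectral radius $\rho$ and Perron vector $p=(p_1,\dots,p_n)^{\mathsf T}$, and let $\Lambda=\rho I-A$. Then for all distinct $i,j\in V$, $$(\Lambda_{jj})^{-1}_i\,a_{\setminus j\,j}=\frac{p_i}{p_j}.$$
   Context: $A=(a_{ij})$ has $a_{ij}$ equal to the sum of weights of the edges joining $i$ and $j$ (loops, multiple edges allowed). The Perron vector $p$ is the positive eigenvector of $A$ for $\rho$ with entries summing to 1. Matrices are indexed by vertices; $\Lambda_{jj}$ is $\Lambda$ with row and column $j$ deleted (indexed by $V\setminus\{j\}$); $N^{-1}_i$ is the row of $N^{-1}$ indexed by $i$; $a_{\setminus j\,j}$ is column $j$ of $A$ with $a_{jj}$ removed. *)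

theory Defs
  imports "HOL-Analysis.Analysis"
begin

text \<open>A weighted multigraph: vertex set V, edge set E, each edge has a set of
  one (loop) or two endpoints in V, and a weight.\<close>
definition weighted_multigraph ::
  "'v set \<Rightarrow> 'e set \<Rightarrow> ('e \<Rightarrow> 'v set) \<Rightarrow> ('e \<Rightarrow> real) \<Rightarrow> bool" where
  "weighted_multigraph V E ends w \<longleftrightarrow> finite V \<and> finite E \<and>
     (\<forall>e\<in>E. ends e \<subseteq> V \<and> 1 \<le> card (ends e) \<and> card (ends e) \<le> 2)"

definition positive_weights :: "'e set \<Rightarrow> ('e \<Rightarrow> real) \<Rightarrow> bool" where
  "positive_weights E w \<longleftrightarrow> (\<forall>e\<in>E. w e > 0)"

definition mg_connected :: "'v set \<Rightarrow> 'e set \<Rightarrow> ('e \<Rightarrow> 'v set) \<Rightarrow> bool" where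
  "mg_connected V E ends \<longleftrightarrow>
     (\<forall>u\<in>V. \<forall>v\<in>V. (u, v) \<in> {(x, y). \<exists>e\<in>E. ends e = {x, y}}\<^sup>*)"

definition adj_mat :: "'e set \<Rightarrow> ('e \<Rightarrow> 'v set) \<Rightarrow> ('e \<Rightarrow> real) \<Rightarrow> 'v \<Rightarrow> 'v \<Rightarrow> real" where
  "adj_mat E ends w i j = (\<Sum>e\<in>{e\<in>E. ends e = {i, j}}. w e)"

definition eigenvalue_on :: "'v set \<Rightarrow> ('v \<Rightarrow> 'v \<Rightarrow> real) \<Rightarrow> complex \<Rightarrow> bool" where
  "eigenvalue_on V M c \<longleftrightarrow> (\<exists>x :: 'v \<Rightarrow> complex. (\<exists>u\<in>V. x u \<noteq> 0) \<and>
     (\<forall>u\<in>V. (\<Sum>v\<in>V. complex_of_real (M u v) * x v) = c * x u))"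

definition spectral_radius_on :: "'v set \<Rightarrow> ('v \<Rightarrow> 'v \<Rightarrow> real) \<Rightarrow> real" where
  "spectral_radius_on V M = Max {cmod c | c. eigenvalue_on V M c}"

definition perron_vector :: "'v set \<Rightarrow> ('v \<Rightarrow> 'v \<Rightarrow> real) \<Rightarrow> real \<Rightarrow> ('v \<Rightarrow> real) \<Rightarrow> bool" where
  "perron_vector V M \<rho> p \<longleftrightarrow> (\<forall>u\<in>V. p u > 0) \<and> (\<Sum>u\<in>V. p u) = 1 \<and>
     (\<forall>u\<in>V. (\<Sum>v\<in>V. M u v * p v) = \<rho> * p u)"

definition inverse_on :: "'v set \<Rightarrow> ('v \<Rightarrow> 'v \<Rightarrow> real) \<Rightarrow> ('v \<Rightarrow> 'v \<Rightarrow> real) \<Rightarrow> bool" where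
  "inverse_on S M N \<longleftrightarrow> (\<forall>u\<in>S. \<forall>v\<in>S.
     (\<Sum>k\<in>S. M u k * N k v) = (if u = v then 1 else 0) \<and>
     (\<Sum>k\<in>S. N u k * M k v) = (if u = v then 1 else 0))"

end

theory Submission
  imports Defs "Jordan_Normal_Form.Determinant"
begin
hide_const (open) Determinant.adj_mat

lemma inv_exists:
  fixes S :: "'v set" and M :: "'v \<Rightarrow> 'v \<Rightarrow> real"
  assumes fin: "finite S"
    and inj: "\<And>x. (\<forall>u\<in>S. (\<Sum>w\<in>S. M u w * x w) = 0) \<Longrightarrow> (\<forall>u\<in>S. x u = 0)"
  shows "\<exists>N. inverse_on S M N"
proof -
  define n where "n = card S"
  obtain f where f: "bij_betw f {0..<n} S" using ex_bij_betw_nat_finite[OF fin] n_def by blast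
  define g where "g = the_inv_into {0..<n} f"
  have fg: "\<And>u. u \<in> S \<Longrightarrow> f (g u) = u" "\<And>u. u \<in> S \<Longrightarrow> g u < n"
    using f unfolding g_def
    by (auto simp: bij_betw_def f_the_inv_into_f the_inv_into_into[of f "{0..<n}"] intro!: the_inv_into_into[of f "{0..<n}" _ "{0..<n}", simplified])
  have gf: "\<And>a. a < n \<Longrightarrow> g (f a) = a" using f unfolding g_def bij_betw_def
    by (simp add: the_inv_into_f_f)
  have fS: "\<And>a. a < n \<Longrightarrow> f a \<in> S" using f by (auto simp: bij_betw_def)
  define B where "B = mat n n (\<lambda>(a,b). M (f a) (f b))"
  have Bc: "B \<in> carrier_mat n n" unfolding B_def by simp
  have reidx: "\<And>h. (\<Sum>k\<in>S. h k) = (\<Sum>c = 0..<n. h (f c))"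
    using sum.reindex_bij_betw[OF f] by metis
  have "Determinant.det B \<noteq> 0"
  proof
    assume "Determinant.det B = 0"
    then obtain v where v: "v \<in> carrier_vec n" "v \<noteq> 0\<^sub>v n" "B *\<^sub>v v = 0\<^sub>v n"
      using det_0_iff_vec_prod_zero_field[OF Bc] by blast
    define x where "x u = v $ g u" for u
    have "\<forall>u\<in>S. (\<Sum>w\<in>S. M u w * x w) = 0"
    proof
      fix u assume u: "u \<in> S"
      have "(\<Sum>w\<in>S. M u w * x w) = (\<Sum>c = 0..<n. M u (f c) * v $ c)"
        unfolding reidx x_def by (simp add: gf)
      also have "\<dots> = (B *\<^sub>v v) $ g u"
        using v(1) fg[OF u] unfolding B_def
        by (simp add: scalar_prod_def Matrix.row_def)
      also have "\<dots> = 0" using v(3) fg[OF u] by simp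
      finally show "(\<Sum>w\<in>S. M u w * x w) = 0" .
    qed
    hence "\<forall>u\<in>S. x u = 0" by (rule inj)
    hence "v = 0\<^sub>v n" using v(1) fS gf unfolding x_def
      by (intro eq_vecI) (auto, metis)
    with v(2) show False by simp
  qed
  from det_non_zero_imp_unit[OF Bc this, of "()"]
  obtain C where C: "C \<in> carrier_mat n n" "C * B = 1\<^sub>m n" "B * C = 1\<^sub>m n"
    unfolding Units_def ring_mat_def by auto
  define N where "N u v = C $$ (g u, g v)" for u v
  have "inverse_on S M N" unfolding inverse_on_def
  proof (intro ballI conjI)
    fix u v assume u: "u \<in> S" and v: "v \<in> S"
    have "(\<Sum>k\<in>S. M u k * N k v) = (B * C) $$ (g u, g v)"
      unfolding reidx N_def using C(1) fg u v unfolding B_def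
      by (simp add: scalar_prod_def Matrix.row_def col_def gf)
    also have "\<dots> = (if u = v then 1 else 0)" using C(3) fg u v by (auto, metis)
    finally show "(\<Sum>k\<in>S. M u k * N k v) = (if u = v then 1 else 0)" .
    have "(\<Sum>k\<in>S. N u k * M k v) = (C * B) $$ (g u, g v)"
      unfolding reidx N_def using C(1) fg u v unfolding B_def
      by (simp add: scalar_prod_def Matrix.row_def col_def gf)
    also have "\<dots> = (if u = v then 1 else 0)" using C(2) fg u v by (auto, metis)
    finally show "(\<Sum>k\<in>S. N u k * M k v) = (if u = v then 1 else 0)" .
  qed
  thus ?thesis by blast
qed
theorem lemma8:
  fixes V :: "'v set" and E :: "'e set" and ends :: "'e \<Rightarrow> 'v set" and w :: "'e \<Rightarrow> real"
    and p :: "'v \<Rightarrow> real" and i j :: 'v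
  assumes "weighted_multigraph V E ends w"
    and "positive_weights E w"
    and "mg_connected V E ends"
    and "card V \<ge> 2"
    and "perron_vector V (adj_mat E ends w) (spectral_radius_on V (adj_mat E ends w)) p"
    and "i \<in> V" and "j \<in> V" and "i \<noteq> j"
  shows "let A = adj_mat E ends w; \<rho> = spectral_radius_on V A;
             \<Lambda> = (\<lambda>u v. (if u = v then \<rho> else 0) - A u v)
         in (\<exists>N. inverse_on (V - {j}) \<Lambda> N) \<and>
            (\<forall>N. inverse_on (V - {j}) \<Lambda> N \<longrightarrow>
                 (\<Sum>k\<in>V - {j}. N i k * A k j) = p i / p j)"
proof -
  define A where "A = adj_mat E ends w"
  define \<rho> where "\<rho> = spectral_radius_on V A"
  define \<Lambda> where "\<Lambda> = (\<lambda>u v. (if u = v then \<rho> else 0) - A u v)"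
  define S where "S = V - {j}"
  have finV: "finite V" and finE: "finite E" and endsV: "\<And>e. e \<in> E \<Longrightarrow> ends e \<subseteq> V"
    using assms(1) unfolding weighted_multigraph_def by auto
  have finS: "finite S" using finV S_def by simp
  have wpos: "\<And>e. e \<in> E \<Longrightarrow> w e > 0" using assms(2) unfolding positive_weights_def by auto
  have ppos: "\<And>u. u \<in> V \<Longrightarrow> p u > 0" and peig: "\<And>u. u \<in> V \<Longrightarrow> (\<Sum>v\<in>V. A u v * p v) = \<rho> * p u"
    using assms(5) unfolding perron_vector_def A_def \<rho>_def by auto
  have Anonneg: "\<And>u v. A u v \<ge> 0" unfolding A_def Defs.adj_mat_def
    by (intro sum_nonneg) (auto intro: less_imp_le wpos)
  have Apos: "A u v > 0" if "e \<in> E" "ends e = {u, v}" for e u v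
  proof -
    have "A u v \<ge> w e" unfolding A_def Defs.adj_mat_def
      using that finE wpos
      by (intro member_le_sum) (auto intro: less_imp_le)
    with wpos[OF that(1)] show ?thesis by simp
  qed
  have Vsplit: "\<And>h. (\<Sum>v\<in>V. h v) = (\<Sum>v\<in>S. h v) + h j"
    unfolding S_def using finV assms(7) by (simp add: sum.remove add.commute)
  have rho_nonneg: "\<rho> \<ge> 0"
  proof -
    have "0 \<le> (\<Sum>v\<in>V. A j v * p v)" using Anonneg ppos
      by (intro sum_nonneg) (simp add: less_imp_le)
    hence "0 \<le> \<rho> * p j" using peig[OF assms(7)] by simp
    thus ?thesis using ppos[OF assms(7)] by (simp add: zero_le_mult_iff)
  qed
  have Sp: "(\<Sum>v\<in>S. A u v * p v) = \<rho> * p u - A u j * p j" if "u \<in> V" for u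
    using peig[OF that] Vsplit[of "\<lambda>v. A u v * p v"] by simp
  have Lsum: "(\<Sum>v\<in>S. \<Lambda> u v * x v) = \<rho> * x u - (\<Sum>v\<in>S. A u v * x v)" if "u \<in> S" for u x
  proof -
    have "(\<Sum>v\<in>S. \<Lambda> u v * x v) = (\<Sum>v\<in>S. (if u = v then \<rho> * x v else 0)) - (\<Sum>v\<in>S. A u v * x v)"
      unfolding \<Lambda>_def sum_subtractf[symmetric] by (intro sum.cong refl) (auto simp: algebra_simps)
    also have "(\<Sum>v\<in>S. (if u = v then \<rho> * x v else 0)) = \<rho> * x u"
      using finS that by (simp add: sum.delta)
    finally show ?thesis .
  qed
  have kern: "\<forall>u\<in>S. x u = 0" if hx: "\<forall>u\<in>S. (\<Sum>v\<in>S. \<Lambda> u v * x v) = 0" for x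
  proof (rule ccontr)
    assume "\<not> (\<forall>u\<in>S. x u = 0)"
    then obtain u0 where u0: "u0 \<in> S" "x u0 \<noteq> 0" by blast
    define y where "y u = \<bar>x u\<bar> / p u" for u
    define M where "M = Max (y ` S)"
    have SV: "S \<subseteq> V" unfolding S_def by auto
    have yle: "\<And>u. u \<in> S \<Longrightarrow> y u \<le> M" unfolding M_def using finS by simp
    have ynn: "\<And>u. u \<in> S \<Longrightarrow> 0 \<le> y u" unfolding y_def using ppos SV
      by (auto intro!: divide_nonneg_pos)
    have "0 < y u0" unfolding y_def using u0 ppos SV by auto
    hence Mpos: "M > 0" using yle[OF u0(1)] by linarith
    define T where "T = {u\<in>S. y u = M}"
    have "M \<in> y ` S" unfolding M_def using finS u0 by (intro Max_in) auto
    then obtain u1 where u1: "u1 \<in> T" unfolding T_def by auto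
    have Tprop: "A u j = 0 \<and> (\<forall>v\<in>S. A u v \<noteq> 0 \<longrightarrow> v \<in> T)" if uT: "u \<in> T" for u
    proof -
      have uS: "u \<in> S" and yu: "y u = M" using uT unfolding T_def by auto
      have uV: "u \<in> V" using uS SV by auto
      have eq: "\<rho> * x u = (\<Sum>v\<in>S. A u v * x v)" using hx uS Lsum[OF uS, of x] by simp
      have absx: "\<bar>x v\<bar> = p v * y v" if "v \<in> S" for v
        unfolding y_def using ppos[of v] that SV by auto
      have "\<rho> * p u * M = \<bar>\<rho> * x u\<bar>" using absx[OF uS] yu rho_nonneg
        by (simp add: abs_mult)
      also have "\<dots> \<le> (\<Sum>v\<in>S. \<bar>A u v * x v\<bar>)" unfolding eq by (rule sum_abs)
      also have "\<dots> = (\<Sum>v\<in>S. A u v * p v * y v)"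
        by (intro sum.cong refl) (simp add: abs_mult Anonneg absx)
      finally have ineq: "\<rho> * p u * M \<le> (\<Sum>v\<in>S. A u v * p v * y v)" .
      have "(\<Sum>v\<in>S. A u v * p v * M) = (\<rho> * p u - A u j * p j) * M"
        using Sp[OF uV] by (simp add: sum_distrib_right[symmetric])
      hence "(\<Sum>v\<in>S. A u v * p v * (M - y v)) = (\<rho> * p u - A u j * p j) * M - (\<Sum>v\<in>S. A u v * p v * y v)"
        by (simp add: right_diff_distrib sum_subtractf)
      with ineq have key: "(\<Sum>v\<in>S. A u v * p v * (M - y v)) + A u j * p j * M \<le> 0"
        by (simp add: algebra_simps)
      have nn: "\<forall>v\<in>S. 0 \<le> A u v * p v * (M - y v)"
        using Anonneg ppos SV yle by (auto intro!: mult_nonneg_nonneg simp: less_imp_le)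
      hence s0: "0 \<le> (\<Sum>v\<in>S. A u v * p v * (M - y v))" by (simp add: sum_nonneg)
      have t0: "0 \<le> A u j * p j * M" using Anonneg ppos[OF assms(7)] Mpos by simp
      have "A u j * p j * M = 0" using key s0 t0 by linarith
      hence Aj: "A u j = 0" using ppos[OF assms(7)] Mpos by simp
      have "(\<Sum>v\<in>S. A u v * p v * (M - y v)) = 0" using key s0 t0 by linarith
      hence z: "\<forall>v\<in>S. A u v * p v * (M - y v) = 0"
        using sum_nonneg_eq_0_iff[OF finS, of "\<lambda>v. A u v * p v * (M - y v)"] nn by simp
      have "\<forall>v\<in>S. A u v \<noteq> 0 \<longrightarrow> v \<in> T"
      proof (intro ballI impI)
        fix v assume v: "v \<in> S" "A u v \<noteq> 0"
        with z have "A u v * p v * (M - y v) = 0" by blast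
        moreover have "p v \<noteq> 0" using ppos[of v] v SV by auto
        ultimately have "M - y v = 0" using v(2) by simp
        thus "v \<in> T" using v unfolding T_def by simp
      qed
      with Aj show ?thesis by blast
    qed
    have u1V: "u1 \<in> V" using u1 SV unfolding T_def by auto
    have "(u1, j) \<in> {(x, y). \<exists>e\<in>E. ends e = {x, y}}\<^sup>*"
      using assms(3) u1V assms(7) unfolding mg_connected_def by blast
    moreover have "z \<in> T" if "(u1, z) \<in> {(x, y). \<exists>e\<in>E. ends e = {x, y}}\<^sup>*" for z
      using that
    proof (induction rule: rtrancl_induct)
      case base then show ?case using u1 .
    next
      case (step y' z)
      then obtain e where e: "e \<in> E" "ends e = {y', z}" by auto
      have zV: "z \<in> V" using endsV[OF e(1)] e(2) by auto
      have Ayz: "A y' z > 0" using Apos[OF e] .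
      have "z \<noteq> j" using Tprop[OF step.IH] Ayz by auto
      hence "z \<in> S" using zV S_def by auto
      thus ?case using Tprop[OF step.IH] Ayz by auto
    qed
    ultimately have "j \<in> T" by blast
    thus False unfolding T_def S_def by auto
  qed
  have ex: "\<exists>N. inverse_on S \<Lambda> N" by (rule inv_exists[OF finS kern]) blast
  have all: "(\<Sum>k\<in>S. N i k * A k j) = p i / p j" if N: "inverse_on S \<Lambda> N" for N
  proof -
    have iS: "i \<in> S" using assms(6,8) S_def by auto
    have Lp: "(\<Sum>v\<in>S. \<Lambda> k v * p v) = A k j * p j" if "k \<in> S" for k
      using Lsum[OF that, of p] Sp[of k] that S_def by auto
    have "(\<Sum>k\<in>S. N i k * (\<Sum>v\<in>S. \<Lambda> k v * p v)) = (\<Sum>v\<in>S. (\<Sum>k\<in>S. N i k * \<Lambda> k v) * p v)"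
      unfolding sum_distrib_left sum_distrib_right
      by (subst sum.swap) (simp add: mult.assoc)
    also have "\<dots> = (\<Sum>v\<in>S. (if i = v then p v else 0))"
      using N iS unfolding inverse_on_def by (intro sum.cong refl) auto
    also have "\<dots> = p i" using finS iS by (simp add: sum.delta)
    finally have "p i = (\<Sum>k\<in>S. N i k * A k j) * p j"
      using Lp by (simp add: sum_distrib_right mult.assoc)
    thus ?thesis using ppos[OF assms(7)] by (simp add: field_simps)
  qed
  show ?thesis unfolding Let_def using ex all
    unfolding A_def[symmetric] \<rho>_def[symmetric] \<Lambda>_def[symmetric] S_def[symmetric] by blast
qed
end
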